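(* Consider an implication of canonical form $(\ast)$ and an environment $\eta$, and let $n\ge\max\{2,M_1,\dots,M_M\}$. If the implication is $n$-ary $\eta$-valid, then the Parametricity Condition holds for it and $\eta$.
   Context: $\mathsf{Heap}$: finite partial functions $\mathsf{PosInt}\to\mathsf{Int}$; $g\sqsubseteq h$ means $h$ extends $g$; $h\cdot g$ union of disjoint heaps; componentwise on $\mathsf{Heap}^n$. $\mathsf{IRel}_n$: upward closed subsets of $\mathsf{Heap}^n$; $p*q=\{\mathbf f\cdot\mathbf g\mid\mathbf f\in p,\mathbf g\in q,\text{componentwise disjoint}\}$; $\Delta_n(X)=\{(h_1,\dots,h_n)\mid\exists f\in X.\ \forall k.\ f\sqsubseteq h_k\}$. Assertions: built from primitive assertions $P$, assertion variables, $\mathsf{true},\mathsf{false},\wedge,\vee,*$, quantifiers over integer variables. $n$-ary meaning under $\eta$ and $\rho:\mathsf{AVar}\to\mathsf{IRel}_n$: $[\![P]\!]^n=\Delta_n([\![P]\!]^{\mathrm{prim}}_\eta)$, $[\![a]\!]^n=\rho(a)$, connectives by $\mathsf{Heap}^n,\emptyset,\cap,\cup,*$, quantifiers by unions/intersections. $n$-ary $\eta$-validity of $\varphi\Rightarrow\psi$: $[\![\varphi]\!]^n_{\eta,\rho}\subseteq[\![\psi]\!]^n_{\eta,\rho}$ for all $\rho:\mathsf{AVar}\to\mathsf{IRel}_n$. Canonical form $(\ast)$: $\bigwedge_{i=1}^M\varphi_i*a_{i,1}*\cdots*a_{i,M_i}\Rightarrow\bigvee_{j=1}^N\psi_j*b_{j,1}*\cdots*b_{j,N_j}$,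 $M\ge1$, $N\ge0$, $\varphi_i,\psi_j$ free of assertion variables, every $b_{j,k}$ among the $a_{i,k}$. $V=\{a_{i,k}\}$; $\Pi(i)(c)=|\{k\mid a_{i,k}=c\}|$, $\Omega(j)(c)=|\{k\mid b_{j,k}=c\}|$; $\Pi(i)\ge\Omega(j)$ iff $\Pi(i)(c)\ge\Omega(j)(c)$ for all $c\in V$. Disjunct $j$ is empty if $N_j=0$. Parametricity Condition: for all $h,h_1,\dots,h_M\in\mathsf{Heap}$ with $h_i\sqsubseteq h$ and $h_i\in[\![\varphi_i]\!]^1_\eta$ for all $i$, either (1) there are $i,j$ with $h_i\in[\![\psi_j]\!]^1_\eta$ and $\Pi(i)\ge\Omega(j)$, or (2) there is an empty disjunct $j$ with $h\in[\![\psi_j]\!]^1_\eta$. *)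

theory Defs
  imports Main
begin

type_synonym heap = "int \<rightharpoonup> int"

definition Heap :: "heap set" where
  "Heap = {h. finite (dom h) \<and> dom h \<subseteq> {0<..}}"

definition Heapn :: "nat \<Rightarrow> heap list set" where
  "Heapn n = {hs. length hs = n \<and> set hs \<subseteq> Heap}"

definition tup_le :: "heap list \<Rightarrow> heap list \<Rightarrow> bool" where
  "tup_le f g \<longleftrightarrow> length f = length g \<and> (\<forall>k<length f. f ! k \<subseteq>\<^sub>m g ! k)"

definition IRel :: "nat \<Rightarrow> heap list set set" where
  "IRel n = {p. p \<subseteq> Heapn n \<and> (\<forall>f\<in>p. \<forall>g\<in>Heapn n. tup_le f g \<longrightarrow> g \<in> p)}"

definition hstar :: "heap list set \<Rightarrow> heap list set \<Rightarrow> heap list set" where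
  "hstar p q = {map2 (++) f g | f g. f \<in> p \<and> g \<in> q \<and> length f = length g \<and>
      (\<forall>k<length f. dom (f ! k) \<inter> dom (g ! k) = {})}"

definition Delta :: "nat \<Rightarrow> heap set \<Rightarrow> heap list set" where
  "Delta n X = {hs \<in> Heapn n. \<exists>f\<in>X. \<forall>k<n. f \<subseteq>\<^sub>m hs ! k}"

text \<open>'p: primitive assertions, 'a: assertion variables, 'v: integer variables.\<close>
datatype ('p, 'a, 'v) assn =
    Prim 'p
  | AVar 'a
  | ATrue
  | AFalse
  | AAnd "('p, 'a, 'v) assn" "('p, 'a, 'v) assn"
  | AOr "('p, 'a, 'v) assn" "('p, 'a, 'v) assn"
  | AStar "('p, 'a, 'v) assn" "('p, 'a, 'v) assn"
  | AEx 'v "('p, 'a, 'v) assn"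
  | AAll 'v "('p, 'a, 'v) assn"

fun avars :: "('p, 'a, 'v) assn \<Rightarrow> 'a set" where
  "avars (Prim P) = {}"
| "avars (AVar a) = {a}"
| "avars ATrue = {}"
| "avars AFalse = {}"
| "avars (AAnd x y) = avars x \<union> avars y"
| "avars (AOr x y) = avars x \<union> avars y"
| "avars (AStar x y) = avars x \<union> avars y"
| "avars (AEx v x) = avars x"
| "avars (AAll v x) = avars x"

text \<open>n-ary semantics. I P eta is the primitive meaning of P under the environment eta.\<close>
fun sem :: "('p \<Rightarrow> ('v \<Rightarrow> int) \<Rightarrow> heap set) \<Rightarrow> nat \<Rightarrow> ('v \<Rightarrow> int) \<Rightarrow> ('a \<Rightarrow> heap list set)
             \<Rightarrow> ('p, 'a, 'v) assn \<Rightarrow> heap list set" where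
  "sem I n \<eta> \<rho> (Prim P) = Delta n (I P \<eta>)"
| "sem I n \<eta> \<rho> (AVar a) = \<rho> a"
| "sem I n \<eta> \<rho> ATrue = Heapn n"
| "sem I n \<eta> \<rho> AFalse = {}"
| "sem I n \<eta> \<rho> (AAnd x y) = sem I n \<eta> \<rho> x \<inter> sem I n \<eta> \<rho> y"
| "sem I n \<eta> \<rho> (AOr x y) = sem I n \<eta> \<rho> x \<union> sem I n \<eta> \<rho> y"
| "sem I n \<eta> \<rho> (AStar x y) = hstar (sem I n \<eta> \<rho> x) (sem I n \<eta> \<rho> y)"
| "sem I n \<eta> \<rho> (AEx x \<phi>) = (\<Union>v. sem I n (\<eta>(x := v)) \<rho> \<phi>)"
| "sem I n \<eta> \<rho> (AAll x \<phi>) = (\<Inter>v. sem I n (\<eta>(x := v)) \<rho> \<phi>)"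

text \<open>Unary meaning of an assertion free of assertion variables, as a set of heaps
  (the choice of rho is irrelevant for such assertions; we use the empty relation).\<close>
definition sem1 :: "('p \<Rightarrow> ('v \<Rightarrow> int) \<Rightarrow> heap set) \<Rightarrow> ('v \<Rightarrow> int) \<Rightarrow> ('p, 'a, 'v) assn \<Rightarrow> heap set" where
  "sem1 I \<eta> \<phi> = {h. [h] \<in> sem I 1 \<eta> (\<lambda>_. {}) \<phi>}"

definition valid :: "('p \<Rightarrow> ('v \<Rightarrow> int) \<Rightarrow> heap set) \<Rightarrow> nat \<Rightarrow> ('v \<Rightarrow> int)
                      \<Rightarrow> ('p, 'a, 'v) assn \<Rightarrow> ('p, 'a, 'v) assn \<Rightarrow> bool" where
  "valid I n \<eta> \<phi> \<psi> \<longleftrightarrow> (\<forall>\<rho>. (\<forall>a. \<rho> a \<in> IRel n) \<longrightarrow> sem I n \<eta> \<rho> \<phi> \<subseteq> sem I n \<eta> \<rho> \<psi>)"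

definition star_chain :: "('p, 'a, 'v) assn \<Rightarrow> 'a list \<Rightarrow> ('p, 'a, 'v) assn" where
  "star_chain \<phi> as = foldl (\<lambda>acc a. AStar acc (AVar a)) \<phi> as"

fun big_and :: "('p, 'a, 'v) assn list \<Rightarrow> ('p, 'a, 'v) assn" where
  "big_and [] = ATrue"
| "big_and [x] = x"
| "big_and (x # y # xs) = AAnd x (big_and (y # xs))"

fun big_or :: "('p, 'a, 'v) assn list \<Rightarrow> ('p, 'a, 'v) assn" where
  "big_or [] = AFalse"
| "big_or [x] = x"
| "big_or (x # y # xs) = AOr x (big_or (y # xs))"

text \<open>An implication in canonical form is given by the list L of pairs (phi_i, [a_i1,...,a_iMi])
  (i = 1..M) and the list R of pairs (psi_j, [b_j1,...,b_jNj]) (j = 1..N).\<close>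
definition canon_lhs :: "(('p, 'a, 'v) assn \<times> 'a list) list \<Rightarrow> ('p, 'a, 'v) assn" where
  "canon_lhs L = big_and (map (\<lambda>(\<phi>, as). star_chain \<phi> as) L)"

definition canon_rhs :: "(('p, 'a, 'v) assn \<times> 'a list) list \<Rightarrow> ('p, 'a, 'v) assn" where
  "canon_rhs R = big_or (map (\<lambda>(\<psi>, bs). star_chain \<psi> bs) R)"

definition Vset :: "(('p, 'a, 'v) assn \<times> 'a list) list \<Rightarrow> 'a set" where
  "Vset L = (\<Union>(\<phi>, as)\<in>set L. set as)"

definition canonical :: "(('p, 'a, 'v) assn \<times> 'a list) list \<Rightarrow> (('p, 'a, 'v) assn \<times> 'a list) list \<Rightarrow> bool" where
  "canonical L R \<longleftrightarrow> L \<noteq> [] \<and>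
     (\<forall>(\<phi>, as)\<in>set L. avars \<phi> = {}) \<and>
     (\<forall>(\<psi>, bs)\<in>set R. avars \<psi> = {} \<and> set bs \<subseteq> Vset L)"

text \<open>Occurrence count c in a list of variables (used for Pi(i)(c) and Omega(j)(c)).\<close>
definition occ :: "'a list \<Rightarrow> 'a \<Rightarrow> nat" where
  "occ xs c = length (filter (\<lambda>x. x = c) xs)"

definition dominates :: "(('p, 'a, 'v) assn \<times> 'a list) list \<Rightarrow> 'a list \<Rightarrow> 'a list \<Rightarrow> bool" where
  "dominates L as bs \<longleftrightarrow> (\<forall>c\<in>Vset L. occ as c \<ge> occ bs c)"

definition parametricity_condition ::
  "('p \<Rightarrow> ('v \<Rightarrow> int) \<Rightarrow> heap set) \<Rightarrow> ('v \<Rightarrow> int)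
   \<Rightarrow> (('p, 'a, 'v) assn \<times> 'a list) list \<Rightarrow> (('p, 'a, 'v) assn \<times> 'a list) list \<Rightarrow> bool" where
  "parametricity_condition I \<eta> L R \<longleftrightarrow>
     (\<forall>h \<in> Heap. \<forall>hs. length hs = length L \<and> set hs \<subseteq> Heap \<and>
        (\<forall>i<length L. hs ! i \<subseteq>\<^sub>m h \<and> hs ! i \<in> sem1 I \<eta> (fst (L ! i))) \<longrightarrow>
        (\<exists>i<length L. \<exists>j<length R. hs ! i \<in> sem1 I \<eta> (fst (R ! j)) \<and>
            dominates L (snd (L ! i)) (snd (R ! j)))
        \<or> (\<exists>j<length R. snd (R ! j) = [] \<and> h \<in> sem1 I \<eta> (fst (R ! j))))"

end

theory Submission
  imports Defs "HOL-Library.Nat_Bijection"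
begin


lemma Heapn_iff: "X \<in> Heapn n \<longleftrightarrow> length X = n \<and> (\<forall>k<n. X!k \<in> Heap)"
  by (auto simp: Heapn_def set_conv_nth)

lemma Heap_add: "f \<in> Heap \<Longrightarrow> g \<in> Heap \<Longrightarrow> f ++ g \<in> Heap"
  by (auto simp: Heap_def)

lemma Heap_restr: "f \<in> Heap \<Longrightarrow> f |` A \<in> Heap"
  by (auto simp: Heap_def)

lemma Heap_le: assumes "g \<in> Heap" "f \<subseteq>\<^sub>m g" shows "f \<in> Heap"
proof -
  have "dom f \<subseteq> dom g" using assms(2) by (rule map_le_implies_dom_le)
  then show ?thesis using assms(1) unfolding Heap_def using finite_subset by blast
qed

lemma hstar_Heapn: "p \<subseteq> Heapn n \<Longrightarrow> q \<subseteq> Heapn n \<Longrightarrow> hstar p q \<subseteq> Heapn n"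
proof
  fix X assume pq: "p \<subseteq> Heapn n" "q \<subseteq> Heapn n" and "X \<in> hstar p q"
  then obtain f g where "X = map2 (++) f g" "f \<in> Heapn n" "g \<in> Heapn n"
    by (auto simp: hstar_def)
  then show "X \<in> Heapn n" by (auto simp: Heapn_iff Heap_add)
qed

lemma hstar_elim:
  assumes "Z \<in> hstar p q"
  obtains f g where "Z = map2 (++) f g" "f \<in> p" "g \<in> q" "length f = length g"
    "\<forall>k<length f. dom (f ! k) \<inter> dom (g ! k) = {}"
  using assms unfolding hstar_def by blast

lemma IRel_empty: "{} \<in> IRel n" by (simp add: IRel_def)

lemma sem_Heapn: "(\<forall>a. \<rho> a \<in> IRel n) \<Longrightarrow> sem I n \<eta> \<rho> \<phi> \<subseteq> Heapn n"
proof (induction \<phi> arbitrary: \<eta>)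
  case (AStar x y) thus ?case using hstar_Heapn by simp
next
  case (AAll v \<phi>)
  have "sem I n (\<eta>(v:=0)) \<rho> \<phi> \<subseteq> Heapn n" using AAll by simp
  then show ?case by auto
qed (auto simp: Delta_def IRel_def)

lemma tup_le_trans: "tup_le X Y \<Longrightarrow> tup_le Y Z \<Longrightarrow> tup_le X Z"
  unfolding tup_le_def by (metis map_le_trans)

lemma tup_le_refl: "tup_le X X" by (simp add: tup_le_def)

lemma split_restr: "a \<subseteq>\<^sub>m Y \<Longrightarrow> Y = a ++ (Y |` (- dom a))"
  apply (rule ext)
  subgoal for x by (cases "a x"; cases "Y x") (auto simp: map_add_def restrict_map_def map_le_def dom_def)
  done

lemma sem_up:
  assumes "\<forall>a. \<rho> a \<in> IRel n" "X \<in> sem I n \<eta> \<rho> \<phi>" "Y \<in> Heapn n" "tup_le X Y"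
  shows "Y \<in> sem I n \<eta> \<rho> \<phi>"
  using assms(2-4)
proof (induction \<phi> arbitrary: \<eta> X Y)
  case (Prim P)
  from Prim.prems(1) obtain f where f: "f \<in> I P \<eta>" "\<forall>k<n. f \<subseteq>\<^sub>m X!k" "X \<in> Heapn n"
    by (auto simp: Delta_def)
  have "\<forall>k<n. X!k \<subseteq>\<^sub>m Y!k" using Prim.prems(3) f(3) by (simp add: tup_le_def Heapn_iff)
  then have "\<forall>k<n. f \<subseteq>\<^sub>m Y!k" using f(2) map_le_trans by blast
  then show ?case using f(1) Prim.prems(2) by (auto simp: Delta_def)
next
  case (AVar a)
  then show ?case using assms(1) by (auto simp: IRel_def)
next
  case (AStar x y)
  from AStar.prems(1) obtain f g where fg: "X = map2 (++) f g" "f \<in> sem I n \<eta> \<rho> x"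
    "g \<in> sem I n \<eta> \<rho> y" "length f = length g" "\<forall>k<length f. dom (f ! k) \<inter> dom (g ! k) = {}"
    by (auto simp: hstar_def)
  have fH: "f \<in> Heapn n" and gH: "g \<in> Heapn n" using fg sem_Heapn[OF assms(1)] by blast+
  define g' where "g' = map (\<lambda>k. (Y!k) |` (- dom (f!k))) [0..<n]"
  have lY: "length Y = n" using AStar.prems by (simp add: Heapn_iff)
  have lX: "length X = n" using fg fH gH by (simp add: Heapn_iff)
  have fk: "f!k \<subseteq>\<^sub>m Y!k" if "k < n" for k
  proof -
    have "f!k \<subseteq>\<^sub>m X!k" using fg that fH gH
      by (simp add: Heapn_iff map_add_comm[of "f!k" "g!k"])
    moreover have "X!k \<subseteq>\<^sub>m Y!k" using AStar.prems(3) that lX by (simp add: tup_le_def)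
    ultimately show ?thesis by (rule map_le_trans)
  qed
  have gk: "g!k \<subseteq>\<^sub>m g'!k" if "k < n" for k
  proof -
    have "g!k \<subseteq>\<^sub>m X!k" using fg that fH gH by (simp add: Heapn_iff)
    moreover have "X!k \<subseteq>\<^sub>m Y!k" using AStar.prems(3) that lX by (simp add: tup_le_def)
    ultimately have "g!k \<subseteq>\<^sub>m Y!k" by (rule map_le_trans)
    then show ?thesis using fg(5) that fH gH unfolding g'_def
      by (auto simp: Heapn_iff map_le_def restrict_map_def)
  qed
  have g'H: "g' \<in> Heapn n" using AStar.prems(2) by (auto simp: g'_def Heapn_iff Heap_restr)
  have g'sem: "g' \<in> sem I n \<eta> \<rho> y"
    using AStar.IH(2)[OF fg(3) g'H] gk gH by (simp add: tup_le_def g'_def Heapn_iff)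
  have Yeq: "Y = map2 (++) f g'"
  proof (rule nth_equalityI)
    show "length Y = length (map2 (++) f g')" using lY fH by (simp add: g'_def Heapn_iff)
  next
    fix k assume "k < length Y"
    then have k: "k < n" using lY by simp
    have "Y!k = (f!k) ++ ((Y!k) |` (- dom (f!k)))"
      using fk[OF k] by (rule split_restr)
    then show "Y!k = map2 (++) f g' ! k" using k fH by (simp add: g'_def Heapn_iff)
  qed
  have dj': "\<forall>k<length f. dom (f ! k) \<inter> dom (g' ! k) = {}" using fH by (auto simp: g'_def Heapn_iff)
  have len': "length f = length g'" using fH by (simp add: g'_def Heapn_iff)
  show ?case unfolding sem.simps hstar_def mem_Collect_eq
    apply (rule exI[of _ f], rule exI[of _ g'], intro conjI)
        apply (rule Yeq) apply (rule fg(2)) apply (rule g'sem) apply (rule len')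
    by (rule dj')
qed auto

lemma map_le_add_left: "dom f \<inter> dom g = {} \<Longrightarrow> f \<subseteq>\<^sub>m f ++ g"
  by (simp add: map_add_comm[of f g])

definition meet :: "nat \<Rightarrow> heap list \<Rightarrow> heap" where
  "meet n X = (\<lambda>x. if (\<forall>c<n. (X!c) x = (X!0) x) then (X!0) x else None)"

lemma meet_app: "meet n X a = (if (\<forall>c<n. (X!c) a = (X!0) a) then (X!0) a else None)"
  by (simp only: meet_def)

lemma meet_le: assumes "c < n" shows "meet n X \<subseteq>\<^sub>m X!c"
  unfolding map_le_def
proof
  fix a assume "a \<in> dom (meet n X)"
  then have ne: "meet n X a \<noteq> None" by (simp add: dom_def)
  have cnd: "\<forall>c<n. (X!c) a = (X!0) a"
  proof (rule ccontr)
    assume "\<not> (\<forall>c<n. (X!c) a = (X!0) a)"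
    then have "meet n X a = None" unfolding meet_app by (rule if_not_P)
    then show False using ne by contradiction
  qed
  have "meet n X a = (X!0) a" unfolding meet_app by (rule if_P[OF cnd])
  also have "\<dots> = (X!c) a" using cnd[rule_format, OF assms] by (rule sym)
  finally show "meet n X a = (X!c) a" .
qed

lemma meet_greatest: assumes "1 \<le> n" "\<forall>c<n. g \<subseteq>\<^sub>m X!c" shows "g \<subseteq>\<^sub>m meet n X"
  unfolding map_le_def
proof
  fix a assume a: "a \<in> dom g"
  have h1: "\<forall>c<n. g a = (X!c) a" using assms(2) a unfolding map_le_def by blast
  have h2: "g a = (X!0) a" using h1 assms(1) by auto
  have "\<forall>c<n. (X!c) a = (X!0) a"
  proof (intro allI impI)
    fix c assume "c < n"
    then have "g a = (X!c) a" using h1 by blast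
    then show "(X!c) a = (X!0) a" using h2 by simp
  qed
  then have "meet n X a = (X!0) a" unfolding meet_app by (rule if_P)
  then show "g a = meet n X a" using h2 by simp
qed

lemma meet_Heap: "1 \<le> n \<Longrightarrow> X \<in> Heapn n \<Longrightarrow> meet n X \<in> Heap"
proof -
  assume a: "1 \<le> n" "X \<in> Heapn n"
  then have "X!0 \<in> Heap" by (simp add: Heapn_iff)
  moreover have "meet n X \<subseteq>\<^sub>m X!0" using a(1) by (intro meet_le) simp
  ultimately show ?thesis by (rule Heap_le)
qed

lemma Heapn1: "[h] \<in> Heapn 1 \<longleftrightarrow> h \<in> Heap" by (simp add: Heapn_iff)

lemma tup_le1: "tup_le [a] [b] \<longleftrightarrow> a \<subseteq>\<^sub>m b" by (simp add: tup_le_def)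

lemma sem_meet:
  assumes "1 \<le> n" "\<forall>a. \<rho> a \<in> IRel n"
  shows "avars \<phi> = {} \<Longrightarrow> X \<in> sem I n \<eta> \<rho> \<phi> \<Longrightarrow> [meet n X] \<in> sem I 1 \<eta> (\<lambda>_. {}) \<phi>"
proof (induction \<phi> arbitrary: \<eta> X)
  case (Prim P)
  then obtain f where f: "f \<in> I P \<eta>" "\<forall>k<n. f \<subseteq>\<^sub>m X!k" "X \<in> Heapn n" by (auto simp: Delta_def)
  then show ?case using meet_greatest[OF assms(1)] meet_Heap[OF assms(1)]
    by (auto simp: Delta_def Heapn_iff)
next
  case ATrue
  then show ?case using meet_Heap[OF assms(1)] by (simp add: Heapn_iff)
next
  case (AAnd x y) then show ?case by auto
next
  case (AOr x y) then show ?case by auto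
next
  case (AEx v x) then show ?case by auto
next
  case (AAll v x) then show ?case by auto
next
  case (AStar x y)
  from AStar.prems(2) obtain f g where fg: "X = map2 (++) f g" "f \<in> sem I n \<eta> \<rho> x"
    "g \<in> sem I n \<eta> \<rho> y" "length f = length g" "\<forall>k<length f. dom (f ! k) \<inter> dom (g ! k) = {}"
    by (auto simp: hstar_def)
  have fH: "f \<in> Heapn n" and gH: "g \<in> Heapn n" using fg sem_Heapn[OF assms(2)] by blast+
  have mf: "[meet n f] \<in> sem I 1 \<eta> (\<lambda>_. {}) x" using AStar fg by auto
  have mg: "[meet n g] \<in> sem I 1 \<eta> (\<lambda>_. {}) y" using AStar fg by auto
  have d1: "dom (meet n f) \<subseteq> dom (f!0)" using assms(1) by (intro map_le_implies_dom_le meet_le) simp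
  have d2: "dom (meet n g) \<subseteq> dom (g!0)" using assms(1) by (intro map_le_implies_dom_le meet_le) simp
  have d3: "dom (f!0) \<inter> dom (g!0) = {}" using fg(5) fH assms(1) by (simp add: Heapn_iff)
  have dj: "dom (meet n f) \<inter> dom (meet n g) = {}" using d1 d2 d3 by blast
  have "[meet n f ++ meet n g] \<in> hstar (sem I 1 \<eta> (\<lambda>_. {}) x) (sem I 1 \<eta> (\<lambda>_. {}) y)"
    unfolding hstar_def mem_Collect_eq
    apply (rule exI[of _ "[meet n f]"], rule exI[of _ "[meet n g]"]) using mf mg dj by simp
  moreover have "meet n f ++ meet n g \<subseteq>\<^sub>m meet n X"
  proof (rule meet_greatest[OF assms(1)], intro allI impI)
    fix c assume c: "c < n"
    have "X!c = (f!c) ++ (g!c)" using fg c fH gH by (simp add: Heapn_iff)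
    moreover have "meet n f \<subseteq>\<^sub>m (f!c) ++ (g!c)"
    proof -
      have "dom (f!c) \<inter> dom (g!c) = {}" using fg(5) c fH by (simp add: Heapn_iff)
      then have "f!c \<subseteq>\<^sub>m (f!c) ++ (g!c)" by (rule map_le_add_left)
      then show ?thesis using meet_le[OF c, of f] map_le_trans by blast
    qed
    moreover have "meet n g \<subseteq>\<^sub>m (f!c) ++ (g!c)"
      using meet_le[OF c, of g] map_le_map_add[of "g!c" "f!c"] map_le_trans by blast
    ultimately show "meet n f ++ meet n g \<subseteq>\<^sub>m X!c" by (simp add: map_add_le_mapI)
  qed
  moreover have "X \<in> Heapn n" using AStar.prems(2) sem_Heapn[OF assms(2)] by blast
  ultimately have m1: "[meet n f ++ meet n g] \<in> sem I 1 \<eta> (\<lambda>_. {}) (AStar x y)"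
    and m2: "meet n f ++ meet n g \<subseteq>\<^sub>m meet n X" and m3: "X \<in> Heapn n" by simp_all
  have m4: "[meet n X] \<in> Heapn 1" using meet_Heap[OF assms(1) m3] by (simp add: Heapn_iff)
  have m5: "tup_le [meet n f ++ meet n g] [meet n X]" using m2 by (simp add: tup_le_def)
  show ?case by (rule sem_up[OF _ m1 m4 m5]) (simp add: IRel_empty)
qed auto

lemma sem_lift:
  "avars \<phi> = {} \<Longrightarrow> [h] \<in> sem I 1 \<eta> (\<lambda>_. {}) \<phi> \<Longrightarrow> X \<in> Heapn n \<Longrightarrow> \<forall>k<n. h \<subseteq>\<^sub>m X!k
   \<Longrightarrow> X \<in> sem I n \<eta> \<rho> \<phi>"
proof (induction \<phi> arbitrary: \<eta> h X)
  case (Prim P)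
  then obtain f where f: "f \<in> I P \<eta>" "f \<subseteq>\<^sub>m h" by (auto simp: Delta_def)
  then have "\<forall>k<n. f \<subseteq>\<^sub>m X!k" using Prim.prems(4) map_le_trans[OF f(2)] by blast
  then show ?case using f Prim.prems(3) by (auto simp: Delta_def)
next
  case (AAnd x y) then show ?case by auto
next
  case (AOr x y) then show ?case by auto
next
  case (AEx v x) then show ?case by auto
next
  case (AAll v x)
  show ?case
  proof (simp, intro allI)
    fix w
    have p: "[h] \<in> sem I 1 (\<eta>(v:=w)) (\<lambda>_. {}) x" using AAll.prems(2) by simp
    have "avars x = {}" using AAll.prems(1) by simp
    then show "X \<in> sem I n (\<eta>(v:=w)) \<rho> x" by (rule AAll.IH[OF _ p AAll.prems(3) AAll.prems(4)])
  qed
next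
  case (AStar x y)
  have hin: "[h] \<in> hstar (sem I 1 \<eta> (\<lambda>_. {}) x) (sem I 1 \<eta> (\<lambda>_. {}) y)" using AStar.prems(2) by simp
  from hin obtain f g where fg: "[h] = map2 (++) f g" "f \<in> sem I 1 \<eta> (\<lambda>_. {}) x"
    "g \<in> sem I 1 \<eta> (\<lambda>_. {}) y" "length f = length g" "\<forall>k<length f. dom (f ! k) \<inter> dom (g ! k) = {}"
    by (rule hstar_elim)
  have e: "\<forall>a. (\<lambda>_. {}::heap list set) a \<in> IRel 1" by (simp add: IRel_empty)
  have fH1: "f \<in> Heapn 1" using sem_Heapn[OF e] fg(2) by blast
  have gH1: "g \<in> Heapn 1" using sem_Heapn[OF e] fg(3) by blast
  from fH1 have l1: "length f = 1" and fgH1: "f!0 \<in> Heap" by (simp_all add: Heapn_iff)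
  from gH1 have l2: "length g = 1" and fgH2: "g!0 \<in> Heap" by (simp_all add: Heapn_iff)
  obtain a where fa: "f = [a]" using l1 by (cases f) auto
  obtain b where gb: "g = [b]" using l2 by (cases g) auto
  have ab: "f = [a]" "g = [b]" "a \<in> Heap" "b \<in> Heap" using fa gb fgH1 fgH2 by auto
  have h: "h = a ++ b" and dj: "dom a \<inter> dom b = {}" using fg ab by auto
  have ah: "a \<subseteq>\<^sub>m h" using h dj map_le_add_left by blast
  have bh: "b \<subseteq>\<^sub>m h" using h by simp
  define F where "F = replicate n a"
  define G where "G = map (\<lambda>k. (X!k) |` (- dom a)) [0..<n]"
  have FH: "F \<in> Heapn n" using ab by (simp add: F_def Heapn_iff)
  have GH: "G \<in> Heapn n" using AStar.prems(3) by (auto simp: G_def Heapn_iff Heap_restr)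
  have ax: "avars x = {}" and ay: "avars y = {}" using AStar.prems(1) by auto
  have a1: "[a] \<in> sem I 1 \<eta> (\<lambda>_. {}) x" using fg(2) fa by simp
  have b1: "[b] \<in> sem I 1 \<eta> (\<lambda>_. {}) y" using fg(3) gb by simp
  have aF: "\<forall>k<n. a \<subseteq>\<^sub>m F!k" by (simp add: F_def)
  have Fs: "F \<in> sem I n \<eta> \<rho> x" by (rule AStar.IH(1)[OF ax a1 FH aF])
  have bG: "\<forall>k<n. b \<subseteq>\<^sub>m G ! k"
  proof (intro allI impI)
    fix k assume k: "k < n"
    have "b \<subseteq>\<^sub>m X!k" using map_le_trans[OF bh] AStar.prems(4) k by blast
    then show "b \<subseteq>\<^sub>m G ! k" using k dj by (auto simp: G_def map_le_def restrict_map_def)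
  qed
  have Gs: "G \<in> sem I n \<eta> \<rho> y" by (rule AStar.IH(2)[OF ay b1 GH bG])
  moreover have Xeq: "X = map2 (++) F G"
  proof (rule nth_equalityI)
    show "length X = length (map2 (++) F G)" using AStar.prems(3) by (simp add: F_def G_def Heapn_iff)
  next
    fix k assume "k < length X"
    then have k: "k < n" using AStar.prems(3) by (simp add: Heapn_iff)
    have "a \<subseteq>\<^sub>m X!k" using map_le_trans[OF ah] AStar.prems(4) k by blast
    then have "X!k = a ++ ((X!k) |` (- dom a))" by (rule split_restr)
    then show "X!k = map2 (++) F G ! k" using k by (simp add: F_def G_def)
  qed
  have lFG: "length F = length G" by (simp add: F_def G_def)
  have djFG: "\<forall>k<length F. dom (F ! k) \<inter> dom (G ! k) = {}" by (auto simp: F_def G_def)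
  show ?case unfolding sem.simps hstar_def mem_Collect_eq
    apply (rule exI[of _ F], rule exI[of _ G], intro conjI)
        apply (rule Xeq) apply (rule Fs) apply (rule Gs) apply (rule lFG)
    by (rule djFG)
qed auto

lemma star_chain_snoc: "star_chain \<phi> (as @ [a]) = AStar (star_chain \<phi> as) (AVar a)"
  by (simp add: star_chain_def)

lemma star_chain_Nil: "star_chain \<phi> [] = \<phi>"
  by (simp add: star_chain_def)

lemma sem_big_and: "xs \<noteq> [] \<Longrightarrow> X \<in> sem I n \<eta> \<rho> (big_and xs) \<longleftrightarrow> (\<forall>x\<in>set xs. X \<in> sem I n \<eta> \<rho> x)"
  by (induction xs rule: big_and.induct) auto

lemma sem_big_or: "X \<in> sem I n \<eta> \<rho> (big_or xs) \<longleftrightarrow> (\<exists>x\<in>set xs. X \<in> sem I n \<eta> \<rho> x)"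
  by (induction xs rule: big_or.induct) auto

definition tdisj :: "nat \<Rightarrow> heap list \<Rightarrow> heap list \<Rightarrow> bool" where
  "tdisj n X Y \<longleftrightarrow> (\<forall>c<n. dom (X!c) \<inter> dom (Y!c) = {})"


lemma decomp:
  assumes "\<forall>a. \<rho> a \<in> IRel n"
  shows "X \<in> sem I n \<eta> \<rho> (star_chain \<psi> bs) \<Longrightarrow> \<exists>F Gs. F \<in> sem I n \<eta> \<rho> \<psi> \<and> tup_le F X \<and>
    length Gs = length bs \<and>
    (\<forall>l<length bs. Gs!l \<in> \<rho> (bs!l) \<and> tup_le (Gs!l) X \<and> tdisj n F (Gs!l)) \<and>
    (\<forall>l<length bs. \<forall>l'<length bs. l \<noteq> l' \<longrightarrow> tdisj n (Gs!l) (Gs!l'))"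
proof (induction bs arbitrary: X rule: rev_induct)
  case Nil
  then show ?case by (auto simp: star_chain_Nil tup_le_refl)
next
  case (snoc b bs)
  from snoc.prems obtain Y G where YG: "X = map2 (++) Y G" "Y \<in> sem I n \<eta> \<rho> (star_chain \<psi> bs)"
    "G \<in> \<rho> b" "length Y = length G" "\<forall>k<length Y. dom (Y ! k) \<inter> dom (G ! k) = {}"
    by (auto simp: star_chain_snoc hstar_def)
  have YH: "Y \<in> Heapn n" using YG sem_Heapn[OF assms] by blast
  have GH: "G \<in> Heapn n" using YG assms by (auto simp: IRel_def)
  have YX: "tup_le Y X" using YG YH GH by (auto simp: tup_le_def Heapn_iff map_le_add_left)
  have GX: "tup_le G X" using YG YH GH by (auto simp: tup_le_def Heapn_iff)
  obtain F Gs where FG: "F \<in> sem I n \<eta> \<rho> \<psi>" "tup_le F Y" "length Gs = length bs"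
    "\<forall>l<length bs. Gs!l \<in> \<rho> (bs!l) \<and> tup_le (Gs!l) Y \<and> tdisj n F (Gs!l)"
    "\<forall>l<length bs. \<forall>l'<length bs. l \<noteq> l' \<longrightarrow> tdisj n (Gs!l) (Gs!l')"
    using snoc.IH[OF YG(2)] by blast
  have dsub: "tup_le Z Y \<Longrightarrow> tdisj n Z G" for Z
    using YG(5) YH by (fastforce simp: tup_le_def tdisj_def Heapn_iff dest!: map_le_implies_dom_le)
  have dsub2: "tup_le Z Y \<Longrightarrow> tdisj n G Z" for Z
    using dsub[of Z] by (auto simp: tdisj_def)
  show ?case
  proof (intro exI[of _ F] exI[of _ "Gs @ [G]"] conjI allI impI)
    show "F \<in> sem I n \<eta> \<rho> \<psi>" by fact
    show "tup_le F X" using FG(2) YX by (rule tup_le_trans)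
    show "length (Gs @ [G]) = length (bs @ [b])" using FG(3) by simp
  next
    fix l assume l: "l < length (bs @ [b])"
    show "(Gs @ [G]) ! l \<in> \<rho> ((bs @ [b]) ! l)"
      using l FG YG by (cases "l < length bs") (auto simp: nth_append)
    show "tup_le ((Gs @ [G]) ! l) X"
      using l FG YX GX by (cases "l < length bs") (auto simp: nth_append intro: tup_le_trans)
    show "tdisj n F ((Gs @ [G]) ! l)"
      using l FG dsub[OF FG(2)] by (cases "l < length bs") (auto simp: nth_append)
  next
    fix l l' assume l: "l < length (bs @ [b])" and l': "l' < length (bs @ [b])" and ne: "l \<noteq> l'"
    show "tdisj n ((Gs @ [G]) ! l) ((Gs @ [G]) ! l')"
      using l l' ne FG dsub dsub2 by (cases "l < length bs"; cases "l' < length bs") (auto simp: nth_append)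
  qed
qed


definition rest :: "heap list \<Rightarrow> (nat \<Rightarrow> int set) \<Rightarrow> heap list" where
  "rest X S = map (\<lambda>c. (X!c) |` S c) [0..<length X]"

lemma restr_union: "(f |` A) ++ (f |` B) = f |` (A \<union> B)"
  by (auto simp: fun_eq_iff map_add_def restrict_map_def split: option.splits)

lemma rest_Heapn: "X \<in> Heapn n \<Longrightarrow> rest X S \<in> Heapn n"
  by (auto simp: rest_def Heapn_iff Heap_restr)

lemma build:
  assumes H: "H \<in> Heapn n" and rho: "\<forall>a. \<rho> a \<in> IRel n"
    and dj: "\<And>k k' c. k < length as \<Longrightarrow> k' < length as \<Longrightarrow> k \<noteq> k' \<Longrightarrow> S k c \<inter> S k' c = {}"
    and base: "rest H (\<lambda>c. - (\<Union>k<length as. S k c)) \<in> sem I n \<eta> \<rho> \<phi>"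
    and pieces: "\<And>k. k < length as \<Longrightarrow> rest H (S k) \<in> \<rho> (as!k)"
  shows "H \<in> sem I n \<eta> \<rho> (star_chain \<phi> as)"
proof -
  define Q where "Q m = (\<lambda>c. - (\<Union>k\<in>{m..<length as}. S k c))" for m
  have lH: "length H = n" using H by (simp add: Heapn_iff)
  have "m \<le> length as \<Longrightarrow> rest H (Q m) \<in> sem I n \<eta> \<rho> (star_chain \<phi> (take m as))" for m
  proof (induction m)
    case 0
    have "Q 0 = (\<lambda>c. - (\<Union>k<length as. S k c))" by (simp add: Q_def atLeast0LessThan)
    then show ?case using base by (simp add: star_chain_Nil)
  next
    case (Suc m)
    then have m: "m < length as" by simp
    have IH: "rest H (Q m) \<in> sem I n \<eta> \<rho> (star_chain \<phi> (take m as))" using Suc by simp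
    have iv: "{m..<length as} = insert m {Suc m..<length as}" using m by auto
    have Qeq: "Q (Suc m) c = Q m c \<union> S m c" for c
    proof -
      have "S m c \<inter> S k c = {}" if "k \<in> {Suc m..<length as}" for k using dj[OF m, of k c] that by auto
      then have "S m c \<inter> (\<Union>k\<in>{Suc m..<length as}. S k c) = {}" by blast
      then show ?thesis unfolding Q_def iv by blast
    qed
    have Qd: "Q m c \<inter> S m c = {}" for c unfolding Q_def iv by blast
    have lq: "length (rest H (Q m)) = length (rest H (S m))" by (simp add: rest_def)
    have eq: "rest H (Q (Suc m)) = map2 (++) (rest H (Q m)) (rest H (S m))"
      by (rule nth_equalityI) (simp_all add: rest_def Qeq restr_union)
    have djr: "\<forall>k<length (rest H (Q m)). dom (rest H (Q m) ! k) \<inter> dom (rest H (S m) ! k) = {}"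
      using Qd by (auto simp: rest_def)
    have "rest H (Q (Suc m)) \<in> hstar (sem I n \<eta> \<rho> (star_chain \<phi> (take m as))) (\<rho> (as!m))"
      unfolding hstar_def mem_Collect_eq
      apply (rule exI[of _ "rest H (Q m)"], rule exI[of _ "rest H (S m)"], intro conjI)
          apply (rule eq) apply (rule IH) apply (rule pieces[OF m]) apply (rule lq)
      by (rule djr)
    then show ?case using m by (simp add: take_Suc_conv_app_nth star_chain_snoc)
  qed
  from this[of "length as"] have "rest H (Q (length as)) \<in> sem I n \<eta> \<rho> (star_chain \<phi> as)" by simp
  moreover have "rest H (Q (length as)) = H"
    by (rule nth_equalityI) (simp_all add: rest_def Q_def restrict_map_def)
  ultimately show ?thesis by simp
qed



lemma rest_nth: "c < length X \<Longrightarrow> rest X S ! c = (X!c) |` S c" by (simp add: rest_def)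
lemma rest_len: "length (rest X S) = length X" by (simp add: rest_def)

lemma map_le_restr: "f \<subseteq>\<^sub>m g \<Longrightarrow> dom f \<inter> T = {} \<Longrightarrow> f \<subseteq>\<^sub>m g |` (- T)"
  unfolding map_le_def restrict_map_def by auto

lemma conflict:
  assumes "tup_le P1 G1" "tup_le P2 G2" "tdisj n G1 G2" "c < n" "length P1 = n" "length P2 = n"
    "x \<in> dom (P1!c)" "x \<in> dom (P2!c)" shows False
proof -
  have "P1!c \<subseteq>\<^sub>m G1!c" using assms(1,4,5) by (simp add: tup_le_def)
  then have "x \<in> dom (G1!c)" using assms(7) map_le_implies_dom_le by blast
  moreover have "P2!c \<subseteq>\<^sub>m G2!c" using assms(2,4,6) by (simp add: tup_le_def)
  then have "x \<in> dom (G2!c)" using assms(8) map_le_implies_dom_le by blast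
  ultimately show False using assms(3,4) by (auto simp: tdisj_def)
qed

lemma occ_card: "occ xs c = card {l. l < length xs \<and> xs!l = c}"
  unfolding occ_def by (rule length_filter_conv_card)

lemma core:
  fixes I :: "'p \<Rightarrow> ('v \<Rightarrow> int) \<Rightarrow> heap set" and \<eta> :: "'v \<Rightarrow> int"
    and L R :: "(('p, 'a, 'v) assn \<times> 'a list) list" and n :: nat
  assumes can: "canonical L R" and n2: "2 \<le> n" and lenL: "\<forall>(\<phi>, as)\<in>set L. length as \<le> n"
    and val: "valid I n \<eta> (canon_lhs L) (canon_rhs R)"
    and hH: "h \<in> Heap" and lhs: "length hs = length L" "set hs \<subseteq> Heap"
    and hsi: "\<forall>i<length L. hs ! i \<subseteq>\<^sub>m h \<and> hs ! i \<in> sem1 I \<eta> (fst (L ! i))"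
  shows "(\<exists>i<length L. \<exists>j<length R. hs ! i \<in> sem1 I \<eta> (fst (R ! j)) \<and> dominates L (snd (L ! i)) (snd (R ! j)))
        \<or> (\<exists>j<length R. snd (R ! j) = [] \<and> h \<in> sem1 I \<eta> (fst (R ! j)))"
proof -
  define M where "M = length L"
  define as where "as i = snd (L!i)" for i
  have lenas: "length (as i) \<le> n" if "i < M" for i
  proof -
    have "L!i \<in> set L" using that by (simp add: M_def)
    from bspec[OF lenL this] show ?thesis by (simp add: as_def split_beta)
  qed
  have avL: "avars (fst (L!i)) = {}" if "i < M" for i
  proof -
    have "L!i \<in> set L" using that by (simp add: M_def)
    moreover have "\<forall>(\<phi>, as)\<in>set L. avars \<phi> = {}" using can by (simp add: canonical_def)
    ultimately show ?thesis by (auto simp: split_beta)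
  qed
  have hsH: "hs!i \<in> Heap" if "i < M" for i using lhs that by (auto simp: M_def)
  have hsle: "hs!i \<subseteq>\<^sub>m h" if "i < M" for i using hsi that by (simp add: M_def)
  have hs1: "[hs!i] \<in> sem I 1 \<eta> (\<lambda>_. {}) (fst (L!i))" if "i < M" for i
    using hsi that by (simp add: M_def sem1_def)
  define U where "U = (\<Union>i<M. dom (hs!i))"
  have Udom: "U \<subseteq> dom h"
  proof
    fix x assume "x \<in> U"
    then obtain i where "i < M" "x \<in> dom (hs!i)" by (auto simp: U_def)
    then show "x \<in> dom h" using map_le_implies_dom_le[OF hsle] by blast
  qed
  define B where "B = h |` U"
  have BH: "B \<in> Heap" using hH by (simp add: B_def Heap_restr)
  have domB: "dom B = U" using Udom by (auto simp: B_def)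
  have Bh: "B \<subseteq>\<^sub>m h" by (auto simp: B_def map_le_def)
  have hsB: "hs!i \<subseteq>\<^sub>m B" if "i < M" for i
    unfolding map_le_def
  proof
    fix x assume x: "x \<in> dom (hs!i)"
    then have "x \<in> U" using that by (auto simp: U_def)
    moreover have "(hs!i) x = h x" using hsle[OF that] x by (simp add: map_le_def)
    ultimately show "(hs!i) x = B x" by (simp add: B_def)
  qed
  have finh: "finite (dom h)" and posh: "dom h \<subseteq> {0<..}" using hH by (auto simp: Heap_def)
  define N0 where "N0 = Max (insert 0 (dom h))"
  have N0ge: "x \<le> N0" if "x \<in> dom h" for x using finh that by (simp add: N0_def)
  have N00: "0 \<le> N0" using finh by (simp add: N0_def)
  define addr :: "(nat \<times> nat) \<times> (nat \<times> nat) \<Rightarrow> int"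
    where "addr pq = N0 + 1 + int (prod_encode (prod_encode (fst pq), prod_encode (snd pq)))" for pq
  have addr_inj: "addr x = addr y \<Longrightarrow> x = y" for x y
    by (simp add: addr_def prod_eq_iff)
  have addr_gt: "N0 < addr x" for x by (simp add: addr_def)
  have addr_nh: "addr x \<notin> dom h" for x using N0ge[of "addr x"] addr_gt[of x] by linarith
  define Key :: "((nat \<times> nat) \<times> (nat \<times> nat)) set"
    where "Key = {pq. fst (fst pq) < M \<and> snd (fst pq) < n \<and> fst (snd pq) < M \<and> snd (snd pq) < n \<and>
      (fst pq = snd pq \<or> fst (fst pq) < fst (snd pq))}"
  have finKey: "finite Key"
    by (rule finite_subset[of _ "({..<M} \<times> {..<n}) \<times> ({..<M} \<times> {..<n})"]) (auto simp: Key_def)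
  define A where "A = addr ` Key"
  define Ak where "Ak i k = addr ` {pq \<in> Key. fst pq = (i,k) \<or> snd pq = (i,k)}" for i k
  have finA: "finite A" using finKey by (simp add: A_def)
  have AU: "A \<inter> U = {}" using Udom addr_nh unfolding A_def by blast
  have Ak_sub: "Ak i k \<subseteq> A" for i k by (auto simp: Ak_def A_def)
  have Ak_dj: "Ak i k \<inter> Ak i k' = {}" if "k \<noteq> k'" for i k k'
  proof (rule ccontr)
    assume "Ak i k \<inter> Ak i k' \<noteq> {}"
    then obtain pq pq' where pq: "pq \<in> Key" "fst pq = (i,k) \<or> snd pq = (i,k)"
      and pq': "pq' \<in> Key" "fst pq' = (i,k') \<or> snd pq' = (i,k')" and eq: "addr pq = addr pq'"
      unfolding Ak_def by blast
    from addr_inj[OF eq] have "pq = pq'" .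
    then show False using pq pq' that by (auto simp: Key_def)
  qed
  have Ak_cross: "Ak i k \<inter> Ak i' k' \<noteq> {}" if "i < M" "i' < M" "k < n" "k' < n" "i \<noteq> i'" for i k i' k'
  proof (cases "i < i'")
    case True
    then have "((i,k),(i',k')) \<in> Key" using that by (simp add: Key_def)
    then have "addr ((i,k),(i',k')) \<in> Ak i k \<inter> Ak i' k'" unfolding Ak_def by force
    then show ?thesis by blast
  next
    case False
    then have "i' < i" using that(5) by simp
    then have "((i',k'),(i,k)) \<in> Key" using that by (simp add: Key_def)
    then have "addr ((i',k'),(i,k)) \<in> Ak i k \<inter> Ak i' k'" unfolding Ak_def by force
    then show ?thesis by blast
  qed
  have Ak_self: "addr ((i,k),(i,k)) \<in> Ak i k" if "i < M" "k < n" for i k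
  proof -
    have "((i,k),(i,k)) \<in> Key" using that by (simp add: Key_def)
    then show ?thesis unfolding Ak_def by force
  qed
  define H0 where "H0 = (\<lambda>x. if x \<in> A then Some 0 else B x)"
  define H where "H = map (\<lambda>c. if c = 0 then H0 else B) [0..<n]"
  define S where "S i k c = (if c = k then U - dom (hs!i) else {}) \<union> (if c = 0 then Ak i k else {})" for i k c
  define P where "P i k = rest H (S i k)" for i k
  define \<rho> where "\<rho> a = {G \<in> Heapn n. \<exists>i<M. \<exists>k<length (as i). as i ! k = a \<and> tup_le (P i k) G}" for a
  have domH0: "dom H0 = A \<union> U" using domB by (auto simp: H0_def)
  have H0H: "H0 \<in> Heap"
  proof -
    have "A \<subseteq> {0<..}" using addr_gt N00 by (auto simp: A_def) (smt (verit))
    moreover have "U \<subseteq> {0<..}" using Udom posh by blast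
    ultimately show ?thesis using finA domB BH by (auto simp: Heap_def domH0)
  qed
  have BH0: "B \<subseteq>\<^sub>m H0" using AU domB by (auto simp: map_le_def H0_def)
  have Hlen: "length H = n" by (simp add: H_def)
  have Hnth: "H!c = (if c = 0 then H0 else B)" if "c < n" for c using that by (simp add: H_def)
  have Hn: "H \<in> Heapn n" using H0H BH Hlen by (simp add: Heapn_iff Hnth)
  have BHc: "B \<subseteq>\<^sub>m H!c" if "c < n" for c using that BH0 by (simp add: Hnth)
  have H1: "H!1 = B" using n2 by (simp add: Hnth)
  have AinH: "x \<in> dom (H!0)" if "x \<in> A" for x using that n2 by (simp add: Hnth domH0)
  have Plen: "length (P i k) = n" for i k by (simp add: P_def rest_len Hlen)
  have domP: "dom (P i k ! c) = dom (H!c) \<inter> S i k c" if "c < n" for i k c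
    using that by (simp add: P_def rest_nth Hlen)
  have PH: "P i k \<in> Heapn n" for i k using Hn by (simp add: P_def rest_Heapn)
  have rhoI: "\<forall>a. \<rho> a \<in> IRel n"
  proof
    fix a
    show "\<rho> a \<in> IRel n" unfolding IRel_def
    proof (intro CollectI conjI ballI impI)
      show "\<rho> a \<subseteq> Heapn n" by (auto simp: \<rho>_def)
    next
      fix f g assume f: "f \<in> \<rho> a" and g: "g \<in> Heapn n" and fg: "tup_le f g"
      from f obtain i k where "i < M" "k < length (as i)" "as i ! k = a" "tup_le (P i k) f"
        by (auto simp: \<rho>_def)
      then show "g \<in> \<rho> a" using g tup_le_trans[OF _ fg] by (auto simp: \<rho>_def)
    qed
  qed
  have lhs_i: "H \<in> sem I n \<eta> \<rho> (star_chain (fst (L!i)) (as i))" if iM: "i < M" for i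
  proof (rule build[OF Hn rhoI])
    show "S i k c \<inter> S i k' c = {}" if "k < length (as i)" "k' < length (as i)" "k \<noteq> k'" for k k' c
      using Ak_dj[OF that(3), of i] Ak_sub[of i k] Ak_sub[of i k'] AU that(3)
      unfolding S_def by auto
  next
    show "rest H (S i k) \<in> \<rho> (as i ! k)" if "k < length (as i)" for k
      using that iM PH[of i k] tup_le_refl[of "P i k"] unfolding \<rho>_def P_def by blast
  next
    show "rest H (\<lambda>c. - (\<Union>k<length (as i). S i k c)) \<in> sem I n \<eta> \<rho> (fst (L!i))"
    proof (rule sem_lift[OF avL[OF iM] hs1[OF iM]])
      show "rest H (\<lambda>c. - (\<Union>k<length (as i). S i k c)) \<in> Heapn n" using Hn by (rule rest_Heapn)
      show "\<forall>c<n. hs ! i \<subseteq>\<^sub>m rest H (\<lambda>c. - (\<Union>k<length (as i). S i k c)) ! c"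
      proof (intro allI impI)
        fix c assume c: "c < n"
        have le: "hs!i \<subseteq>\<^sub>m H!c" using map_le_trans[OF hsB[OF iM] BHc[OF c]] .
        have dU: "dom (hs!i) \<subseteq> U" using iM by (auto simp: U_def)
        have dk: "dom (hs!i) \<inter> S i k c = {}" for k
        proof -
          have "dom (hs!i) \<inter> Ak i k = {}" using dU AU Ak_sub[of i k] by blast
          then show ?thesis unfolding S_def by auto
        qed
        have dall: "dom (hs!i) \<inter> (\<Union>k<length (as i). S i k c) = {}" using dk by blast
        show "hs ! i \<subseteq>\<^sub>m rest H (\<lambda>c. - (\<Union>k<length (as i). S i k c)) ! c"
          using map_le_restr[OF le dall] c by (simp only: rest_nth Hlen)
      qed
    qed
  qed
  have LH: "H \<in> sem I n \<eta> \<rho> (canon_lhs L)"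
  proof -
    have Lne: "L \<noteq> []" using can by (simp add: canonical_def)
    have "\<forall>x\<in>set (map (\<lambda>(\<phi>, as). star_chain \<phi> as) L). H \<in> sem I n \<eta> \<rho> x"
    proof
      fix x assume "x \<in> set (map (\<lambda>(\<phi>, as). star_chain \<phi> as) L)"
      then obtain i where i: "i < M" "x = (\<lambda>(\<phi>, as). star_chain \<phi> as) (L!i)"
        by (auto simp: in_set_conv_nth M_def)
      then have "x = star_chain (fst (L!i)) (as i)" by (simp add: as_def split_beta)
      then show "H \<in> sem I n \<eta> \<rho> x" using lhs_i[OF i(1)] by simp
    qed
    then show ?thesis unfolding canon_lhs_def using sem_big_and[of "map (\<lambda>(\<phi>, as). star_chain \<phi> as) L"] Lne
      by simp
  qed
  have RH: "H \<in> sem I n \<eta> \<rho> (canon_rhs R)" using val rhoI LH by (auto simp: valid_def)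
  then obtain j where j: "j < length R" "H \<in> sem I n \<eta> \<rho> (star_chain (fst (R!j)) (snd (R!j)))"
    unfolding canon_rhs_def sem_big_or by (auto simp: in_set_conv_nth split_beta)
  define \<psi> where "\<psi> = fst (R!j)"
  define bs where "bs = snd (R!j)"
  have avR: "avars \<psi> = {}"
  proof -
    have "R!j \<in> set R" using j by simp
    moreover have "\<forall>(\<psi>, bs)\<in>set R. avars \<psi> = {} \<and> set bs \<subseteq> Vset L" using can by (simp add: canonical_def)
    ultimately show ?thesis by (auto simp: split_beta \<psi>_def)
  qed
  obtain F Gs where FG: "F \<in> sem I n \<eta> \<rho> \<psi>" "tup_le F H" "length Gs = length bs"
    "\<forall>l<length bs. Gs!l \<in> \<rho> (bs!l) \<and> tup_le (Gs!l) H \<and> tdisj n F (Gs!l)"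
    "\<forall>l<length bs. \<forall>l'<length bs. l \<noteq> l' \<longrightarrow> tdisj n (Gs!l) (Gs!l')"
    using decomp[OF rhoI j(2)] unfolding \<psi>_def bs_def by blast
  have n1: "1 \<le> n" using n2 by simp
  have mF: "[meet n F] \<in> sem I 1 \<eta> (\<lambda>_. {}) \<psi>" by (rule sem_meet[OF n1 rhoI avR FG(1)])
  have e: "\<forall>a. (\<lambda>_. {}::heap list set) a \<in> IRel 1" by (simp add: IRel_empty)
  have mFB: "meet n F \<subseteq>\<^sub>m B"
  proof -
    have "meet n F \<subseteq>\<^sub>m F!1" using n2 by (intro meet_le) simp
    moreover have "F!1 \<subseteq>\<^sub>m H!1" using FG(2) n2 Hlen by (simp add: tup_le_def)
    ultimately show ?thesis using H1 map_le_trans by metis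
  qed
  show ?thesis
  proof (cases "bs = []")
    case True
    have "[h] \<in> sem I 1 \<eta> (\<lambda>_. {}) \<psi>"
    proof (rule sem_up[OF e mF])
      show "[h] \<in> Heapn 1" using hH by (simp add: Heapn_iff)
      show "tup_le [meet n F] [h]" using map_le_trans[OF mFB Bh] by (simp add: tup_le_def)
    qed
    then have "h \<in> sem1 I \<eta> \<psi>" by (simp add: sem1_def)
    then show ?thesis using j(1) True unfolding \<psi>_def bs_def by blast
  next
    case False
    have N: "0 < length bs" using False by simp
    have ex: "\<exists>ik. fst ik < M \<and> snd ik < length (as (fst ik)) \<and> as (fst ik) ! snd ik = bs!l \<and>
        tup_le (P (fst ik) (snd ik)) (Gs!l)" if "l < length bs" for l
    proof -
      have "Gs!l \<in> \<rho> (bs!l)" using FG(4) that by blast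
      then obtain i k where "i < M" "k < length (as i)" "as i ! k = bs!l" "tup_le (P i k) (Gs!l)"
        by (auto simp: \<rho>_def)
      then show ?thesis by (intro exI[of _ "(i,k)"]) simp
    qed
    define sel where "sel l = (SOME ik. fst ik < M \<and> snd ik < length (as (fst ik)) \<and>
        as (fst ik) ! snd ik = bs!l \<and> tup_le (P (fst ik) (snd ik)) (Gs!l))" for l
    have sel: "fst (sel l) < M \<and> snd (sel l) < length (as (fst (sel l))) \<and>
        as (fst (sel l)) ! snd (sel l) = bs!l \<and> tup_le (P (fst (sel l)) (snd (sel l))) (Gs!l)"
      if "l < length bs" for l
      unfolding sel_def by (rule someI_ex[OF ex[OF that]])
    define i0 where "i0 = fst (sel 0)"
    define k0 where "k0 = snd (sel 0)"
    have i0M: "i0 < M" and k0: "k0 < length (as i0)" and P0: "tup_le (P i0 k0) (Gs!0)"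
      using sel[OF N] by (simp_all add: i0_def k0_def)
    have k0n: "k0 < n" using k0 lenas[OF i0M] by simp
    have S0: "Ak i k \<subseteq> dom (P i k ! 0)" for i k
    proof
      fix x assume x: "x \<in> Ak i k"
      then have "x \<in> dom (H!0)" using Ak_sub AinH by blast
      moreover have "x \<in> S i k 0" using x by (simp add: S_def)
      ultimately show "x \<in> dom (P i k ! 0)" using domP[of 0 i k] n2 by simp
    qed
    have same: "fst (sel l) = i0" if l: "l < length bs" for l
    proof (rule ccontr)
      assume ne: "fst (sel l) \<noteq> i0"
      have l0: "l \<noteq> 0"
      proof
        assume "l = 0" then show False using ne by (simp add: i0_def)
      qed
      have sl1: "fst (sel l) < M" using sel[OF l] by simp
      have sl2: "snd (sel l) < n" using sel[OF l] lenas[OF sl1] by simp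
      have sl3: "tup_le (P (fst (sel l)) (snd (sel l))) (Gs!l)" using sel[OF l] by simp
      obtain w where w: "w \<in> Ak i0 k0" "w \<in> Ak (fst (sel l)) (snd (sel l))"
        using Ak_cross[OF i0M sl1 k0n sl2 ne[symmetric]] by blast
      have dj: "tdisj n (Gs!0) (Gs!l)" using FG(5) N l l0 by auto
      have wa: "w \<in> dom (P i0 k0 ! 0)" using w(1) S0 by blast
      have wb: "w \<in> dom (P (fst (sel l)) (snd (sel l)) ! 0)" using w(2) S0 by blast
      have n0: "0 < n" using n2 by simp
      show False by (rule conflict[OF P0 sl3 dj n0 Plen Plen wa wb])
    qed
    have inj: "inj_on (\<lambda>l. snd (sel l)) {l. l < length bs \<and> bs!l = c}" for c
    proof (rule inj_onI)
      fix l l' assume l: "l \<in> {l. l < length bs \<and> bs!l = c}" and l': "l' \<in> {l. l < length bs \<and> bs!l = c}"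
        and eq: "snd (sel l) = snd (sel l')"
      show "l = l'"
      proof (rule ccontr)
        assume ne: "l \<noteq> l'"
        have ll: "l < length bs" "l' < length bs" using l l' by auto
        define k where "k = snd (sel l)"
        have kn: "k < n" using sel[OF ll(1)] same[OF ll(1)] lenas[OF i0M] by (simp add: k_def)
        have t1: "tup_le (P i0 k) (Gs!l)" using sel[OF ll(1)] same[OF ll(1)] by (simp add: k_def)
        have t2: "tup_le (P i0 k) (Gs!l')" using sel[OF ll(2)] same[OF ll(2)] eq by (simp add: k_def)
        have dj: "tdisj n (Gs!l) (Gs!l')" using FG(5) ll ne by auto
        have wa: "addr ((i0,k),(i0,k)) \<in> dom (P i0 k ! 0)" using Ak_self[OF i0M kn] S0 by blast
        have n0: "0 < n" using n2 by simp
        show False by (rule conflict[OF t1 t2 dj n0 Plen Plen wa wa])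
      qed
    qed
    have domi: "dominates L (as i0) bs"
      unfolding dominates_def
    proof
      fix c assume "c \<in> Vset L"
      have "card {l. l < length bs \<and> bs!l = c} \<le> card {k. k < length (as i0) \<and> as i0 ! k = c}"
      proof (rule card_inj_on_le[OF inj])
        show "(\<lambda>l. snd (sel l)) ` {l. l < length bs \<and> bs ! l = c} \<subseteq> {k. k < length (as i0) \<and> as i0 ! k = c}"
        proof
          fix k assume "k \<in> (\<lambda>l. snd (sel l)) ` {l. l < length bs \<and> bs ! l = c}"
          then obtain l where l: "l < length bs" "bs!l = c" "k = snd (sel l)" by auto
          then show "k \<in> {k. k < length (as i0) \<and> as i0 ! k = c}" using sel[OF l(1)] same[OF l(1)] by auto
        qed
        show "finite {k. k < length (as i0) \<and> as i0 ! k = c}" by simp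
      qed
      then show "occ bs c \<le> occ (as i0) c" by (simp add: occ_card)
    qed
    have mFi: "meet n F \<subseteq>\<^sub>m hs!i0"
      unfolding map_le_def
    proof
      fix x assume x: "x \<in> dom (meet n F)"
      have mx: "meet n F x = B x" using mFB x by (simp add: map_le_def)
      have xU: "x \<in> U" using map_le_implies_dom_le[OF mFB] x domB by blast
      have "meet n F \<subseteq>\<^sub>m F!k0" using k0n by (rule meet_le)
      then have xF: "x \<in> dom (F!k0)" using x map_le_implies_dom_le by blast
      have xi: "x \<in> dom (hs!i0)"
      proof (rule ccontr)
        assume "x \<notin> dom (hs!i0)"
        then have "x \<in> S i0 k0 k0" using xU by (simp add: S_def)
        moreover have "x \<in> dom (H!k0)" using xU domB map_le_implies_dom_le[OF BHc[OF k0n]] by blast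
        ultimately have xP: "x \<in> dom (P i0 k0 ! k0)" using domP[OF k0n] by blast
        have "P i0 k0 ! k0 \<subseteq>\<^sub>m Gs!0 ! k0" using P0 k0n Plen by (simp add: tup_le_def)
        then have "x \<in> dom (Gs!0 ! k0)" using xP map_le_implies_dom_le by blast
        moreover have "tdisj n F (Gs!0)" using FG(4) N by blast
        ultimately show False using xF k0n by (auto simp: tdisj_def)
      qed
      have "(hs!i0) x = h x" using hsle[OF i0M] xi by (simp add: map_le_def)
      moreover have "B x = h x" using xU by (simp add: B_def)
      ultimately show "meet n F x = (hs!i0) x" using mx by simp
    qed
    have "[hs!i0] \<in> sem I 1 \<eta> (\<lambda>_. {}) \<psi>"
    proof (rule sem_up[OF e mF])
      show "[hs!i0] \<in> Heapn 1" using hsH[OF i0M] by (simp add: Heapn_iff)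
      show "tup_le [meet n F] [hs!i0]" using mFi by (simp add: tup_le_def)
    qed
    then have "hs!i0 \<in> sem1 I \<eta> \<psi>" by (simp add: sem1_def)
    then show ?thesis using i0M j(1) domi unfolding \<psi>_def bs_def as_def M_def by blast
  qed
qed


theorem mainTheorem9:
  fixes I :: "'p \<Rightarrow> ('v \<Rightarrow> int) \<Rightarrow> heap set"
    and \<eta> :: "'v \<Rightarrow> int"
    and L R :: "(('p, 'a, 'v) assn \<times> 'a list) list"
    and n :: nat
  assumes "canonical L R"
    and "2 \<le> n"
    and "\<forall>(\<phi>, as)\<in>set L. length as \<le> n"
    and "valid I n \<eta> (canon_lhs L) (canon_rhs R)"
  shows "parametricity_condition I \<eta> L R"
  unfolding parametricity_condition_def
proof (intro ballI allI impI)
  fix h hs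
  assume hH: "h \<in> Heap"
    and c: "length hs = length L \<and> set hs \<subseteq> Heap \<and>
        (\<forall>i<length L. hs ! i \<subseteq>\<^sub>m h \<and> hs ! i \<in> sem1 I \<eta> (fst (L ! i)))"
  then have c1: "length hs = length L" and c2: "set hs \<subseteq> Heap"
    and c3: "\<forall>i<length L. hs ! i \<subseteq>\<^sub>m h \<and> hs ! i \<in> sem1 I \<eta> (fst (L ! i))" by simp_all
  show "(\<exists>i<length L. \<exists>j<length R. hs ! i \<in> sem1 I \<eta> (fst (R ! j)) \<and>
            dominates L (snd (L ! i)) (snd (R ! j)))
        \<or> (\<exists>j<length R. snd (R ! j) = [] \<and> h \<in> sem1 I \<eta> (fst (R ! j)))"
    by (rule core[OF assms(1) assms(2) assms(3) assms(4) hH c1 c2 c3])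
qed

end
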